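(* Let $d,r\ge1$ and consider a reaction network with species $S_1,\dots,S_{d+r}$ and reactions $y_k\to y'_k$ ($k=1,\dots,K$), where $y_k,y'_k\in\mathbb Z^{d+r}_{\ge 0}$ and $y_k\ne y'_k$. Put $\alpha_i=0$ for $i\le d$ and $\alpha_i=1$ for $i>d$. Fix $\kappa_k>0$, real $\beta_k$, $z^0_\ell\in\mathbb Z^d_{\ge0}$ and $z^0_h\in\mathbb R^r_{>0}$. Let $X^N$ be the continuous-time Markov chain on $\mathbb Z^{d+r}_{\ge0}$ which jumps from $x$ to $x+y'_k-y_k$ with intensity $N^{\beta_k}\kappa_k x^{(y_k)}$, started at $X^N_i(0)=N^{\alpha_i}z^0_i$, where $z^0=(z^0_\ell,z^0_h)$. Let $\theta_0=\max_k(\beta_k+y_k\cdot\alpha)$ and $\mathcal R_0=\{k:\beta_k+y_k\cdot\alpha=\theta_0\}$. Let $Z^N$ be the scaled process with $Z^N_i(t)=N^{-\alpha_i}X^N_i(N^{-\theta_0}t)$, and let $p^N(A,t)=P(Z^N(t)\in A)$. Let $\mathbb S_\ell\times\mathbb S_h$ be the state space of $Z^N$, with $\mathbb S_\ell\subseteq\mathbb Z^d_{\ge0}$ and $\mathbb S_h\subseteq\mathbb R^r_{\ge0}$. For $k\in\mathcal R_0$ and $z_h\in\mathbb R^r_{\ge0}$, put $$\lambda^N_{H,k}(z_h)=\prod_{i=1}^r z_{h,i}\Bigl(z_{h,i}-\tfrac1N\Bigr)\cdots\Bigl(z_{h,i}-\tfrac{y_{k,d+i}-1}{N}\Bigr)$$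 and $s_k=(z^0_h)^{q_H(y_k)}$. For $M>0$ define $S_M=S_{L,M}\times S_{H,M}$, where $$S_{L,M}=\{z_\ell\in\mathbb S_\ell:\|z_\ell\|_\infty\le M\},$$ $$S_{H,M}=\{z_h\in\mathbb S_h:|\lambda^N_{H,k}(z_h)-s_k|\le M/N\ \text{for all }k\in\mathcal R_0\}.$$ Let $\tau^N_m$ be the time of the $\lfloor m\rfloor$-th transition of $Z^N$. Then there exists a constant $c>0$ such that, for $M=N^\rho$ with arbitrary $\rho\in(0,1)$ and $N$ sufficiently large, $p^N(S_M^c,t)\le P(\tau^N_{cM}<t)$ for all $t$.
   Context: Notation: $n^{(k)}=n(n-1)\cdots(n-k+1)$ when $n\ge k$ and $n^{(k)}=0$ otherwise, with $x^{(y)}=\prod_i x_i^{(y_i)}$ and $u^v=\prod_i u_i^{v_i}$. The map $q_H$ keeps the last $r$ coordinates of a vector in $\mathbb Z^{d+r}$. The symbol $\lfloor m\rfloor$ denotes the floor of $m$. *)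

theory Defs
  imports "HOL-Probability.Probability"
begin

text \<open>A CTMC with finitely many transition types k < K, rate function rt x k and
jump map jmp x k is constructed pathwise from a sequence u of i.i.d. Uniform(0,1)
numbers: u (2n) selects the n-th transition (with probability proportional to its rate),
u (2n+1) gives the n-th holding time -ln(u)/total rate (exponential).\<close>

definition tot_rate :: "nat \<Rightarrow> ('s \<Rightarrow> nat \<Rightarrow> real) \<Rightarrow> 's \<Rightarrow> real" where
  "tot_rate K rt x = (\<Sum>k<K. rt x k)"

definition pick :: "nat \<Rightarrow> ('s \<Rightarrow> nat \<Rightarrow> real) \<Rightarrow> 's \<Rightarrow> real \<Rightarrow> nat" where
  "pick K rt x v = (LEAST k. k < K \<and> v * tot_rate K rt x < (\<Sum>j\<le>k. rt x j))"

fun jchain :: "nat \<Rightarrow> ('s \<Rightarrow> nat \<Rightarrow> real) \<Rightarrow> ('s \<Rightarrow> nat \<Rightarrow> 's) \<Rightarrow> 's \<Rightarrow> (nat \<Rightarrow> real) \<Rightarrow> nat \<Rightarrow> 's" where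
  "jchain K rt jmp x0 u 0 = x0"
| "jchain K rt jmp x0 u (Suc n) =
     (let x = jchain K rt jmp x0 u n in
      if tot_rate K rt x = 0 then x else jmp x (pick K rt x (u (2 * n))))"

definition hold :: "nat \<Rightarrow> ('s \<Rightarrow> nat \<Rightarrow> real) \<Rightarrow> ('s \<Rightarrow> nat \<Rightarrow> 's) \<Rightarrow> 's \<Rightarrow> (nat \<Rightarrow> real) \<Rightarrow> nat \<Rightarrow> ereal" where
  "hold K rt jmp x0 u n =
     (let x = jchain K rt jmp x0 u n in
      if tot_rate K rt x = 0 then \<infinity> else ereal (- ln (u (2 * n + 1)) / tot_rate K rt x))"

text \<open>Time of the n-th transition (infinite if fewer than n transitions ever occur).\<close>
definition jtime :: "nat \<Rightarrow> ('s \<Rightarrow> nat \<Rightarrow> real) \<Rightarrow> ('s \<Rightarrow> nat \<Rightarrow> 's) \<Rightarrow> 's \<Rightarrow> (nat \<Rightarrow> real) \<Rightarrow> nat \<Rightarrow> ereal" where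
  "jtime K rt jmp x0 u n = (\<Sum>j<n. hold K rt jmp x0 u j)"

text \<open>State at time s; None if the chain has exploded by time s.\<close>
definition cstate :: "nat \<Rightarrow> ('s \<Rightarrow> nat \<Rightarrow> real) \<Rightarrow> ('s \<Rightarrow> nat \<Rightarrow> 's) \<Rightarrow> 's \<Rightarrow> (nat \<Rightarrow> real) \<Rightarrow> real \<Rightarrow> 's option" where
  "cstate K rt jmp x0 u s =
     (if \<exists>n. ereal s < jtime K rt jmp x0 u (Suc n)
      then Some (jchain K rt jmp x0 u (LEAST n. ereal s < jtime K rt jmp x0 u (Suc n)))
      else None)"

definition ffact_nat :: "nat \<Rightarrow> nat \<Rightarrow> real" where
  "ffact_nat n k = (\<Prod>j<k. real n - real j)"

text \<open>Intensity of reaction k in state x (species indexed 0..<d+r):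
  N^beta_k * kappa_k * x^(y_k).\<close>
definition rn_rate :: "nat \<Rightarrow> (nat \<Rightarrow> nat \<Rightarrow> nat) \<Rightarrow> (nat \<Rightarrow> real) \<Rightarrow> (nat \<Rightarrow> real) \<Rightarrow> nat
    \<Rightarrow> (nat \<Rightarrow> nat) \<Rightarrow> nat \<Rightarrow> real" where
  "rn_rate n y \<kappa> \<beta> N x k = real N powr \<beta> k * \<kappa> k * (\<Prod>i<n. ffact_nat (x i) (y k i))"

definition rn_jump :: "(nat \<Rightarrow> nat \<Rightarrow> nat) \<Rightarrow> (nat \<Rightarrow> nat \<Rightarrow> nat) \<Rightarrow> (nat \<Rightarrow> nat) \<Rightarrow> nat \<Rightarrow> (nat \<Rightarrow> nat)" where
  "rn_jump y y' x k = (\<lambda>i. x i + y' k i - y k i)"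

text \<open>theta_0 = max_k (beta_k + y_k . alpha), alpha_i = 0 for i < d, 1 for d \<le> i < d+r.\<close>
definition theta0 :: "nat \<Rightarrow> nat \<Rightarrow> nat \<Rightarrow> (nat \<Rightarrow> nat \<Rightarrow> nat) \<Rightarrow> (nat \<Rightarrow> real) \<Rightarrow> real" where
  "theta0 d r K y \<beta> = Max ((\<lambda>k. \<beta> k + real (\<Sum>i\<in>{d..<d+r}. y k i)) ` {..<K})"

definition R0 :: "nat \<Rightarrow> nat \<Rightarrow> nat \<Rightarrow> (nat \<Rightarrow> nat \<Rightarrow> nat) \<Rightarrow> (nat \<Rightarrow> real) \<Rightarrow> nat set" where
  "R0 d r K y \<beta> = {k. k < K \<and> \<beta> k + real (\<Sum>i\<in>{d..<d+r}. y k i) = theta0 d r K y \<beta>}"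

definition init_state :: "nat \<Rightarrow> nat \<Rightarrow> (nat \<Rightarrow> nat) \<Rightarrow> (nat \<Rightarrow> real) \<Rightarrow> nat \<Rightarrow> (nat \<Rightarrow> nat)" where
  "init_state d r z0l z0h N =
     (\<lambda>i. if i < d then z0l i else if i < d + r then nat \<lfloor>real N * z0h (i - d)\<rfloor> else 0)"

definition lambdaH :: "nat \<Rightarrow> nat \<Rightarrow> (nat \<Rightarrow> nat \<Rightarrow> nat) \<Rightarrow> nat \<Rightarrow> (nat \<Rightarrow> real) \<Rightarrow> nat \<Rightarrow> real" where
  "lambdaH d r y N zh k = (\<Prod>i<r. \<Prod>j<y k (d + i). zh i - real j / real N)"

definition s_const :: "nat \<Rightarrow> nat \<Rightarrow> (nat \<Rightarrow> nat \<Rightarrow> nat) \<Rightarrow> (nat \<Rightarrow> real) \<Rightarrow> nat \<Rightarrow> real" where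
  "s_const d r y z0h k = (\<Prod>i<r. z0h i ^ y k (d + i))"

text \<open>Membership of the scaled state z = (x_l, x_h / N) (x the unscaled state) in S_M.\<close>
definition in_SM :: "nat \<Rightarrow> nat \<Rightarrow> nat \<Rightarrow> (nat \<Rightarrow> nat \<Rightarrow> nat) \<Rightarrow> (nat \<Rightarrow> real) \<Rightarrow> (nat \<Rightarrow> real)
    \<Rightarrow> nat \<Rightarrow> real \<Rightarrow> (nat \<Rightarrow> nat) \<Rightarrow> bool" where
  "in_SM d r K y \<beta> z0h N M x \<longleftrightarrow>
     (\<forall>i<d. real (x i) \<le> M) \<and>
     (\<forall>k\<in>R0 d r K y \<beta>.
        \<bar>lambdaH d r y N (\<lambda>i. real (x (d + i)) / real N) k - s_const d r y z0h k\<bar> \<le> M / real N)"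

end

theory Submission
  imports Defs
begin


fun reach :: "('s \<Rightarrow> nat \<Rightarrow> 's) \<Rightarrow> 's \<Rightarrow> nat \<Rightarrow> 's set" where
  "reach jmp x0 0 = {x0}"
| "reach jmp x0 (Suc n) = reach jmp x0 n \<union> (\<Union>x\<in>reach jmp x0 n. range (jmp x))"

lemma reach_countable: "countable (reach jmp x0 n)"
  by (induction n) auto

lemma jchain_reach: "jchain K rt jmp x0 u n \<in> reach jmp x0 n"
  by (induction n) (auto simp: Let_def)

lemma jchain_meas:
  assumes U: "\<And>n. U n \<in> borel_measurable M"
  shows "(\<lambda>\<omega>. jchain K rt jmp x0 (\<lambda>n. U n \<omega>) j) \<in> measurable M (count_space (reach jmp x0 j))"
proof (induction j)
  case 0
  then show ?case by simp
next
  case (Suc j)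
  have eq: "(\<lambda>\<omega>. jchain K rt jmp x0 (\<lambda>n. U n \<omega>) (Suc j)) =
    (\<lambda>\<omega>. (\<lambda>x \<omega>. if tot_rate K rt x = 0 then x else jmp x (pick K rt x (U (2*j) \<omega>)))
       (jchain K rt jmp x0 (\<lambda>n. U n \<omega>) j) \<omega>)"
    by (simp add: Let_def)
  show ?case unfolding eq
  proof (rule measurable_compose_countable'[OF _ Suc reach_countable])
    fix x assume x: "x \<in> reach jmp x0 j"
    show "(\<lambda>\<omega>. if tot_rate K rt x = 0 then x else jmp x (pick K rt x (U (2*j) \<omega>)))
        \<in> measurable M (count_space (reach jmp x0 (Suc j)))"
    proof (cases "tot_rate K rt x = 0")
      case True then show ?thesis using x by simp
    next
      case False
      have p: "(\<lambda>\<omega>. pick K rt x (U (2*j) \<omega>)) \<in> measurable M (count_space UNIV)"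
        unfolding pick_def using U by measurable
      have q: "jmp x \<in> measurable (count_space UNIV) (count_space (reach jmp x0 (Suc j)))"
        using x by auto
      show ?thesis using False measurable_compose[OF p q] by (simp add: o_def)
    qed
  qed
qed

lemma hold_meas:
  assumes U: "\<And>n. U n \<in> borel_measurable M"
  shows "(\<lambda>\<omega>. hold K rt jmp x0 (\<lambda>n. U n \<omega>) j) \<in> borel_measurable M"
proof -
  have eq: "(\<lambda>\<omega>. hold K rt jmp x0 (\<lambda>n. U n \<omega>) j) =
    (\<lambda>\<omega>. (\<lambda>x \<omega>. if tot_rate K rt x = 0 then \<infinity> else ereal (- ln (U (2*j+1) \<omega>) / tot_rate K rt x))
       (jchain K rt jmp x0 (\<lambda>n. U n \<omega>) j) \<omega>)"
    by (simp add: hold_def Let_def)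
  show ?thesis unfolding eq
    by (rule measurable_compose_countable'[OF _ jchain_meas[OF U] reach_countable]) (use U in measurable)
qed

lemma jtime_meas:
  assumes U: "\<And>n. U n \<in> borel_measurable M"
  shows "(\<lambda>\<omega>. jtime K rt jmp x0 (\<lambda>n. U n \<omega>) m) \<in> borel_measurable M"
  unfolding jtime_def by (rule borel_measurable_ereal_sum) (rule hold_meas[OF U])



lemma ffact_nat_nonneg: "ffact_nat n k \<ge> 0"
proof (cases "n < k")
  case True
  have "n \<in> {..<k}" using True by simp
  then have "ffact_nat n k = 0" unfolding ffact_nat_def by (intro prod_zero bexI[of _ n]) auto
  then show ?thesis by simp
next
  case False
  then show ?thesis unfolding ffact_nat_def by (intro prod_nonneg) auto
qed

lemma rn_rate_nonneg: "\<forall>k<K. \<kappa> k > 0 \<Longrightarrow> k < K \<Longrightarrow> rn_rate n y \<kappa> \<beta> N x k \<ge> 0"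
  unfolding rn_rate_def by (intro mult_nonneg_nonneg prod_nonneg ffact_nat_nonneg) auto

lemma pick_lt:
  assumes nn: "\<forall>x. \<forall>k<K. rt x k \<ge> 0" and tot: "tot_rate K rt x \<noteq> 0" and v: "0 < v" "v < 1"
  shows "pick K rt x v < K"
proof -
  have K: "K > 0" using tot by (cases K) (auto simp: tot_rate_def)
  have tpos: "tot_rate K rt x > 0" using tot nn unfolding tot_rate_def
    by (metis (no_types, lifting) lessThan_iff order_less_le sum_nonneg)
  have "{..K-1} = {..<K}" using K by auto
  then have "K - 1 < K \<and> v * tot_rate K rt x < (\<Sum>j\<le>K-1. rt x j)"
    using K tpos v by (simp add: tot_rate_def[symmetric])
  then have "(LEAST k. k < K \<and> v * tot_rate K rt x < (\<Sum>j\<le>k. rt x j)) < K"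
    by (rule LeastI2_ex[OF exI]) auto
  then show ?thesis by (simp add: pick_def)
qed

lemma jchain_step:
  assumes nn: "\<forall>x. \<forall>k<K. rt x k \<ge> 0" and u: "0 < u (2*n)" "u (2*n) < 1"
  shows "jchain K rt jmp x0 u (Suc n) = jchain K rt jmp x0 u n \<or>
    (\<exists>k<K. jchain K rt jmp x0 u (Suc n) = jmp (jchain K rt jmp x0 u n) k)"
  using pick_lt[OF nn _ u] by (auto simp: Let_def)

lemma drift:
  assumes nn: "\<forall>x. \<forall>k<K. rt x k \<ge> 0" and u: "\<forall>n. 0 < u n \<and> u n < 1"
    and D: "\<forall>k<K. \<forall>i<m. y k i \<le> D \<and> y' k i \<le> D" and i: "i < m"
  shows "\<bar>real (jchain K rt (rn_jump y y') x0 u n i) - real (x0 i)\<bar> \<le> real n * real D"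
proof (induction n)
  case 0 then show ?case by simp
next
  case (Suc n)
  let ?x = "jchain K rt (rn_jump y y') x0 u n"
  have "\<bar>real (jchain K rt (rn_jump y y') x0 u (Suc n) i) - real (?x i)\<bar> \<le> real D"
  proof -
    from jchain_step[OF nn, of u n] u
    consider "jchain K rt (rn_jump y y') x0 u (Suc n) = ?x"
      | k where "k < K" "jchain K rt (rn_jump y y') x0 u (Suc n) = rn_jump y y' ?x k" by blast
    then show ?thesis
    proof cases
      case 1 then show ?thesis by simp
    next
      case 2
      then have "y k i \<le> D" "y' k i \<le> D" using D i by auto
      then show ?thesis using 2 by (auto simp: rn_jump_def)
    qed
  qed
  then show ?case using Suc by (simp add: algebra_simps)
qed

lemma prod_diff_bound:
  fixes f g :: "'a \<Rightarrow> real"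
  assumes "finite I" "B \<ge> 1" "\<forall>a\<in>I. \<bar>f a\<bar> \<le> B \<and> \<bar>g a\<bar> \<le> B"
  shows "\<bar>(\<Prod>a\<in>I. f a) - (\<Prod>a\<in>I. g a)\<bar> \<le> B ^ card I * (\<Sum>a\<in>I. \<bar>f a - g a\<bar>)"
  using assms
proof (induction I rule: finite_induct)
  case empty then show ?case by simp
next
  case (insert a F)
  let ?F = "\<Prod>a\<in>F. f a" and ?G = "\<Prod>a\<in>F. g a" and ?S = "\<Sum>a\<in>F. \<bar>f a - g a\<bar>"
  have IH: "\<bar>?F - ?G\<bar> \<le> B ^ card F * ?S" using insert by auto
  have Fb: "\<bar>?F\<bar> \<le> B ^ card F"
  proof -
    have "\<bar>?F\<bar> = (\<Prod>a\<in>F. \<bar>f a\<bar>)" by (simp add: abs_prod)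
    also have "\<dots> \<le> (\<Prod>a\<in>F. B)" using insert by (intro prod_mono) auto
    finally show ?thesis by simp
  qed
  have fa: "\<bar>f a\<bar> \<le> B" "\<bar>g a\<bar> \<le> B" using insert by auto
  have Spos: "?S \<ge> 0" by (simp add: sum_nonneg)
  have "f a * ?F - g a * ?G = (f a - g a) * ?F + g a * (?F - ?G)" by (simp add: algebra_simps)
  then have "\<bar>f a * ?F - g a * ?G\<bar> \<le> \<bar>f a - g a\<bar> * \<bar>?F\<bar> + \<bar>g a\<bar> * \<bar>?F - ?G\<bar>"
    by (metis abs_mult abs_triangle_ineq)
  also have "\<dots> \<le> \<bar>f a - g a\<bar> * B ^ card F + B * (B ^ card F * ?S)"
    using insert.prems by (intro add_mono mult_mono Fb fa IH) auto
  also have "\<dots> \<le> \<bar>f a - g a\<bar> * B ^ Suc (card F) + B ^ Suc (card F) * ?S"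
  proof -
    have "B ^ card F \<le> B ^ Suc (card F)" using insert by (simp add: power_increasing)
    then have "\<bar>f a - g a\<bar> * B ^ card F \<le> \<bar>f a - g a\<bar> * B ^ Suc (card F)"
      by (rule mult_left_mono) simp
    moreover have "B * (B ^ card F * ?S) = B ^ Suc (card F) * ?S" by simp
    ultimately show ?thesis by linarith
  qed
  finally show ?case using insert by (simp add: algebra_simps)
qed



lemma lam_bound:
  fixes z0l :: "nat \<Rightarrow> nat" and \<beta> :: "nat \<Rightarrow> real"
  assumes u: "\<forall>n. 0 < u n \<and> u n < 1" and kap: "\<forall>k<K. \<kappa> k > 0"
    and z0h: "\<forall>i<r. z0h i > 0"
    and D: "\<forall>k<K. \<forall>i<d+r. y k i \<le> D \<and> y' k i \<le> D"
    and N: "N \<ge> 1" and nN: "n \<le> N" and k: "k < K"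
  defines "x \<equiv> jchain K (rn_rate (d+r) y \<kappa> \<beta> N) (rn_jump y y') (init_state d r z0l z0h N) u n"
  shows "\<bar>lambdaH d r y N (\<lambda>i. real (x (d + i)) / real N) k - s_const d r y z0h k\<bar>
     \<le> (1 + (\<Sum>i<r. z0h i) + 2 * real D) ^ (r * D) * real (r * D) * ((real n * D + 1 + D) / N)"
proof -
  let ?x0 = "init_state d r z0l z0h N"
  let ?B = "1 + (\<Sum>i<r. z0h i) + 2 * real D"
  let ?E = "(real n * D + 1 + D) / N"
  define S where "S = Sigma {..<r} (\<lambda>i. {..<y k (d+i)})"
  define f where "f = (\<lambda>p. real (x (d + fst p)) / real N - real (snd p) / real N)"
  define g where "g = (\<lambda>p::nat\<times>nat. z0h (fst p))"
  have nn: "\<forall>x. \<forall>k<K. rn_rate (d+r) y \<kappa> \<beta> N x k \<ge> 0" using rn_rate_nonneg[OF kap] by blast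
  have Npos: "real N > 0" using N by simp
  have finS: "finite S" unfolding S_def by auto
  have lam: "lambdaH d r y N (\<lambda>i. real (x (d + i)) / real N) k = (\<Prod>p\<in>S. f p)"
    unfolding lambdaH_def S_def f_def by (subst prod.Sigma) (auto intro!: prod.cong simp: split_beta)
  have sc: "s_const d r y z0h k = (\<Prod>p\<in>S. g p)"
  proof -
    have "(\<Prod>p\<in>S. g p) = (\<Prod>i<r. \<Prod>j<y k (d+i). g (i,j))"
      unfolding S_def by (subst prod.Sigma) (auto simp: split_beta)
    then show ?thesis by (simp add: s_const_def g_def)
  qed
  have cardS: "card S \<le> r * D"
  proof -
    have "card S = (\<Sum>i<r. y k (d+i))" unfolding S_def by (simp add: card_SigmaI)
    also have "\<dots> \<le> (\<Sum>i<r. D)" using D k by (intro sum_mono) auto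
    finally show ?thesis by simp
  qed
  have Zh: "\<And>i. i < r \<Longrightarrow> z0h i \<le> (\<Sum>i<r. z0h i)"
    using z0h by (intro member_le_sum) auto
  have fg: "\<bar>f p - g p\<bar> \<le> ?E" and fb: "\<bar>f p\<bar> \<le> ?B" and gb: "\<bar>g p\<bar> \<le> ?B" if p: "p \<in> S" for p
  proof -
    obtain i j where ij: "p = (i, j)" "i < r" "j < y k (d+i)" using p unfolding S_def by auto
    have "y k (d+i) \<le> D" using D k ij(2) by auto
    then have jD: "real j \<le> D" using ij(3) by simp
    have dr: "\<bar>real (x (d+i)) - real (?x0 (d+i))\<bar> \<le> real n * real D"
      unfolding x_def by (rule drift[OF nn u, where D=D and m="d+r"]) (use D ij in auto)
    have x0: "real (?x0 (d+i)) = of_int \<lfloor>real N * z0h i\<rfloor>"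
    proof -
      have "0 \<le> real N * z0h i" using ij z0h Npos by (simp add: less_imp_le)
      then have "0 \<le> \<lfloor>real N * z0h i\<rfloor>" by simp
      then show ?thesis using ij by (simp add: init_state_def)
    qed
    have fl: "\<bar>real (?x0 (d+i)) - real N * z0h i\<bar> \<le> 1"
    proof -
      have "of_int \<lfloor>real N * z0h i\<rfloor> \<le> real N * z0h i" by (rule of_int_floor_le)
      moreover have "real N * z0h i < of_int \<lfloor>real N * z0h i\<rfloor> + 1" by (rule real_of_int_floor_add_one_gt)
      ultimately show ?thesis unfolding x0 by linarith
    qed
    have "f p - g p = ((real (x (d+i)) - real (?x0 (d+i))) + (real (?x0 (d+i)) - real N * z0h i) - real j) / real N"
    proof -
      have "real N * z0h i / real N = z0h i" using Npos by simp
      then show ?thesis using ij unfolding f_def g_def diff_divide_distrib add_divide_distrib by simp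
    qed
    also have "\<bar>\<dots>\<bar> \<le> ?E"
    proof -
      have "\<bar>(real (x (d+i)) - real (?x0 (d+i))) + (real (?x0 (d+i)) - real N * z0h i) - real j\<bar> \<le> real n * D + 1 + D"
        using dr fl jD by linarith
      then have "\<bar>(real (x (d+i)) - real (?x0 (d+i))) + (real (?x0 (d+i)) - real N * z0h i) - real j\<bar> / real N \<le> ?E"
        by (rule divide_right_mono) simp
      then show ?thesis using Npos by (simp add: abs_divide)
    qed
    finally show fgE: "\<bar>f p - g p\<bar> \<le> ?E" .
    have "?E \<le> real D + 1 + D"
    proof -
      have "real n * D + 1 + D \<le> real N * (D + 1 + D)" using nN N
      proof -
        have "real n * D \<le> real N * D" using nN by (intro mult_right_mono) auto
        moreover have "1 * (1 + real D) \<le> real N * (1 + real D)" using N by (intro mult_right_mono) auto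
        ultimately show ?thesis by (simp add: algebra_simps)
      qed
      then have "?E \<le> real N * (D + 1 + D) / real N" by (rule divide_right_mono) simp
      then show ?thesis using Npos by simp
    qed
    moreover have "\<bar>g p\<bar> \<le> (\<Sum>i<r. z0h i)" using ij z0h Zh unfolding g_def by auto
    ultimately show "\<bar>f p\<bar> \<le> ?B" "\<bar>g p\<bar> \<le> ?B" using fgE by linarith+
  qed
  have "0 \<le> (\<Sum>i<r. z0h i)" using z0h by (intro sum_nonneg) (auto simp: less_imp_le)
  then have B1: "?B \<ge> 1" by simp
  have "\<bar>(\<Prod>p\<in>S. f p) - (\<Prod>p\<in>S. g p)\<bar> \<le> ?B ^ card S * (\<Sum>p\<in>S. \<bar>f p - g p\<bar>)"
    by (rule prod_diff_bound[OF finS B1]) (use fb gb in auto)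
  also have "\<dots> \<le> ?B ^ (r * D) * (real (r * D) * ?E)"
  proof (rule mult_mono)
    show "?B ^ card S \<le> ?B ^ (r * D)" using B1 cardS by (rule power_increasing[rotated])
    have "(\<Sum>p\<in>S. \<bar>f p - g p\<bar>) \<le> (\<Sum>p\<in>S. ?E)" using fg by (intro sum_mono) auto
    also have "\<dots> = real (card S) * ?E" by simp
    also have "\<dots> \<le> real (r * D) * ?E" using Npos by (intro mult_right_mono) (use cardS of_nat_mono in blast, auto)
    finally show "(\<Sum>p\<in>S. \<bar>f p - g p\<bar>) \<le> real (r * D) * ?E" .
  qed (use B1 in auto)
  finally show ?thesis unfolding lam sc by (simp add: mult.assoc)
qed



lemma tot_pos:
  assumes nn: "\<forall>x. \<forall>k<K. rt x k \<ge> 0" and "tot_rate K rt x \<noteq> 0"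
  shows "tot_rate K rt x > 0"
proof -
  have "tot_rate K rt x \<ge> 0" unfolding tot_rate_def using nn by (intro sum_nonneg) auto
  then show ?thesis using assms(2) by linarith
qed

lemma hold_pos:
  assumes nn: "\<forall>x. \<forall>k<K. rt x k \<ge> 0" and u: "\<forall>n. 0 < u n \<and> u n < 1"
  shows "hold K rt jmp x0 u j > 0"
proof (cases "tot_rate K rt (jchain K rt jmp x0 u j) = 0")
  case True then show ?thesis by (simp add: hold_def Let_def)
next
  case False
  have t: "tot_rate K rt (jchain K rt jmp x0 u j) > 0" by (rule tot_pos[OF nn False])
  have "ln (u (2*j+1)) < 0" using u by (simp add: ln_less_zero)
  then have "- ln (u (2*j+1)) / tot_rate K rt (jchain K rt jmp x0 u j) > 0" using t by (simp add: divide_neg_pos)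
  then show ?thesis using False by (simp add: hold_def Let_def)
qed

lemma jtime_mono:
  assumes nn: "\<forall>x. \<forall>k<K. rt x k \<ge> 0" and u: "\<forall>n. 0 < u n \<and> u n < 1" and ab: "a \<le> b"
  shows "jtime K rt jmp x0 u a \<le> jtime K rt jmp x0 u b"
  unfolding jtime_def
  by (rule sum_mono2) (use ab hold_pos[OF nn u] in \<open>auto intro: less_imp_le\<close>)

lemma jtime_nonneg:
  assumes nn: "\<forall>x. \<forall>k<K. rt x k \<ge> 0" and u: "\<forall>n. 0 < u n \<and> u n < 1"
  shows "jtime K rt jmp x0 u a \<ge> 0"
  using jtime_mono[OF nn u, of 0 a] by (simp add: jtime_def)

lemma jtime_lt:
  assumes nn: "\<forall>x. \<forall>k<K. rt x k \<ge> 0" and u: "\<forall>n. 0 < u n \<and> u n < 1"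
    and le: "jtime K rt jmp x0 u (Suc m) \<le> ereal s"
  shows "jtime K rt jmp x0 u m < ereal s"
proof -
  let ?a = "jtime K rt jmp x0 u m" and ?h = "hold K rt jmp x0 u m"
  have eq: "jtime K rt jmp x0 u (Suc m) = ?a + ?h" by (simp add: jtime_def)
  have a0: "?a \<ge> 0" by (rule jtime_nonneg[OF nn u])
  have h0: "?h > 0" by (rule hold_pos[OF nn u])
  show ?thesis using le a0 h0 unfolding eq
    by (cases ?a; cases ?h) auto
qed

lemma path:
  assumes nn: "\<forall>x. \<forall>k<K. rt x k \<ge> 0" and u: "\<forall>n. 0 < u n \<and> u n < 1"
    and good: "\<forall>n\<le>m. Q (jchain K rt jmp x0 u n)"
    and bad: "case cstate K rt jmp x0 u s of None \<Rightarrow> True | Some x \<Rightarrow> \<not> Q x"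
  shows "jtime K rt jmp x0 u m < ereal s"
proof (cases "\<exists>n. ereal s < jtime K rt jmp x0 u (Suc n)")
  case True
  define n0 where "n0 = (LEAST n. ereal s < jtime K rt jmp x0 u (Suc n))"
  have "cstate K rt jmp x0 u s = Some (jchain K rt jmp x0 u n0)"
    using True by (simp add: cstate_def n0_def)
  then have "\<not> Q (jchain K rt jmp x0 u n0)" using bad by simp
  then have mn: "m < n0" using good by (meson not_le)
  have "n0 - 1 < n0" using mn by simp
  then have "\<not> ereal s < jtime K rt jmp x0 u (Suc (n0 - 1))"
    unfolding n0_def by (rule not_less_Least)
  then have "jtime K rt jmp x0 u n0 \<le> ereal s" using mn by (simp add: not_less)
  moreover have "jtime K rt jmp x0 u (Suc m) \<le> jtime K rt jmp x0 u n0"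
    using mn by (intro jtime_mono[OF nn u]) simp
  ultimately show ?thesis by (intro jtime_lt[OF nn u]) simp
next
  case False
  then show ?thesis by (intro jtime_lt[OF nn u]) (simp add: not_less)
qed



lemma xl_bound:
  fixes z0l :: "nat \<Rightarrow> nat" and \<beta> :: "nat \<Rightarrow> real"
  assumes u: "\<forall>n. 0 < u n \<and> u n < 1" and kap: "\<forall>k<K. \<kappa> k > 0"
    and D: "\<forall>k<K. \<forall>i<d+r. y k i \<le> D \<and> y' k i \<le> D" and i: "i < d"
  shows "real (jchain K (rn_rate (d+r) y \<kappa> \<beta> N) (rn_jump y y') (init_state d r z0l z0h N) u n i)
     \<le> real (z0l i) + real n * D"
proof -
  have nn: "\<forall>x. \<forall>k<K. rn_rate (d+r) y \<kappa> \<beta> N x k \<ge> 0" using rn_rate_nonneg[OF kap] by blast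
  have "\<bar>real (jchain K (rn_rate (d+r) y \<kappa> \<beta> N) (rn_jump y y') (init_state d r z0l z0h N) u n i)
       - real (init_state d r z0l z0h N i)\<bar> \<le> real n * D"
    by (rule drift[OF nn u D]) (use i in simp)
  then show ?thesis using i by (simp add: init_state_def)
qed

theorem lemma3p3:
  fixes d r K :: nat
    and y y' :: "nat \<Rightarrow> nat \<Rightarrow> nat"
    and \<kappa> \<beta> :: "nat \<Rightarrow> real"
    and z0l :: "nat \<Rightarrow> nat" and z0h :: "nat \<Rightarrow> real"
    and P :: "'a measure" and U :: "nat \<Rightarrow> 'a \<Rightarrow> real"
  assumes "d \<ge> 1" and "r \<ge> 1" and "K \<ge> 1"
    and "\<forall>k<K. \<exists>i<d+r. y k i \<noteq> y' k i"
    and "\<forall>k<K. \<kappa> k > 0"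
    and "\<forall>i<r. z0h i > 0"
    and "prob_space P"
    and "\<forall>n. U n \<in> borel_measurable P"
    and "prob_space.indep_vars P (\<lambda>_. borel) U UNIV"
    and "\<forall>n. distr P borel (U n) = uniform_measure lborel {0<..<1}"
  shows "\<exists>c>0. \<forall>\<rho>. 0 < \<rho> \<and> \<rho> < 1 \<longrightarrow>
    (\<exists>N0::nat. \<forall>N\<ge>N0. \<forall>t\<ge>0.
      measure P {\<omega> \<in> space P.
        (case cstate K (rn_rate (d+r) y \<kappa> \<beta> N) (rn_jump y y') (init_state d r z0l z0h N)
                (\<lambda>n. U n \<omega>) (real N powr (- theta0 d r K y \<beta>) * t) of
           None \<Rightarrow> True
         | Some x \<Rightarrow> \<not> in_SM d r K y \<beta> z0h N (real N powr \<rho>) x)}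
      \<le> measure P {\<omega> \<in> space P.
        ereal (real N powr theta0 d r K y \<beta>) *
          jtime K (rn_rate (d+r) y \<kappa> \<beta> N) (rn_jump y y') (init_state d r z0l z0h N)
                (\<lambda>n. U n \<omega>) (nat \<lfloor>c * real N powr \<rho>\<rfloor>) < ereal t})"
proof -
  note kap = assms(5) and z0h = assms(6) and Umeas = assms(8) and Udist = assms(10)
  interpret prob_space P by (rule assms(7))
  define D where "D = (\<Sum>k<K. \<Sum>i<d+r. y k i + y' k i)"
  have Db: "\<forall>k<K. \<forall>i<d+r. y k i \<le> D \<and> y' k i \<le> D"
  proof (intro allI impI conjI)
    fix k i assume k: "k < K" and i: "i < d+r"
    have "y k i + y' k i \<le> (\<Sum>i<d+r. y k i + y' k i)" using i by (intro member_le_sum) auto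
    also have "\<dots> \<le> D" unfolding D_def using k by (intro member_le_sum[where f="\<lambda>k. \<Sum>i<d+r. y k i + y' k i"]) auto
    finally show "y k i \<le> D" "y' k i \<le> D" by auto
  qed
  define Zl where "Zl = (\<Sum>i<d. real (z0l i))"
  define B where "B = 1 + (\<Sum>i<r. z0h i) + 2 * real D"
  define L where "L = B ^ (r * D) * real (r * D)"
  define c where "c = 1 / (2 * (real D + 1) * (L + 1))"
  have B1: "B \<ge> 1"
  proof -
    have "0 \<le> (\<Sum>i<r. z0h i)" using z0h by (intro sum_nonneg) (auto simp: less_imp_le)
    then show ?thesis unfolding B_def by simp
  qed
  have L0: "L \<ge> 0" unfolding L_def using B1 by simp
  have Zl0: "Zl \<ge> 0" unfolding Zl_def by (simp add: sum_nonneg)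
  have c0: "c > 0" unfolding c_def using L0 by simp
  have cD: "c * D \<le> 1/2" and cLD: "c * (L * D) \<le> 1/2" and c1: "c \<le> 1"
  proof -
    have pos: "2 * (real D + 1) * (L + 1) > 0" using L0 by simp
    have "real D \<le> (real D + 1) * (L + 1)" using L0 by (simp add: algebra_simps)
    then show "c * D \<le> 1/2" unfolding c_def using pos by (simp add: field_simps)
    have "L * D \<le> (real D + 1) * (L + 1)" using L0 by (simp add: algebra_simps)
    then show "c * (L * D) \<le> 1/2" unfolding c_def using pos by (simp add: field_simps)
    have "1 \<le> 2 * (real D + 1) * (L + 1)" using L0 by (simp add: algebra_simps)
    then show "c \<le> 1" unfolding c_def using pos by (simp add: field_simps)
  qed
  let ?rt = "rn_rate (d+r) y \<kappa> \<beta>"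
  let ?jmp = "rn_jump y y'"
  let ?x0 = "init_state d r z0l z0h"
  have AEu: "AE \<omega> in P. \<forall>n. 0 < U n \<omega> \<and> U n \<omega> < 1"
  proof (subst AE_all_countable, intro allI)
    fix n
    have "AE v in uniform_measure lborel {0<..<1::real}. v \<in> {0<..<1}"
      by (intro AE_uniform_measureI) auto
    then have "AE v in distr P borel (U n). v \<in> {0<..<1}" using Udist by metis
    then show "AE \<omega> in P. 0 < U n \<omega> \<and> U n \<omega> < 1"
      using AE_distrD[OF _ , of "U n" P borel "\<lambda>v. v \<in> {0<..<1}"] Umeas by auto
  qed
  show ?thesis
  proof (intro exI[of _ c] conjI c0 allI impI)
    fix \<rho> :: real assume \<rho>: "0 < \<rho> \<and> \<rho> < 1"
    define Q where "Q = 2 * Zl + 2 * L * (1 + D) + 1"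
    have Q1: "Q \<ge> 1" unfolding Q_def using Zl0 L0 by simp
    define N0 where "N0 = nat \<lceil>Q powr (1/\<rho>)\<rceil> + 1"
    show "\<exists>N0::nat. \<forall>N\<ge>N0. \<forall>t\<ge>0.
      measure P {\<omega> \<in> space P.
        (case cstate K (?rt N) ?jmp (?x0 N)
                (\<lambda>n. U n \<omega>) (real N powr (- theta0 d r K y \<beta>) * t) of
           None \<Rightarrow> True
         | Some x \<Rightarrow> \<not> in_SM d r K y \<beta> z0h N (real N powr \<rho>) x)}
      \<le> measure P {\<omega> \<in> space P.
        ereal (real N powr theta0 d r K y \<beta>) *
          jtime K (?rt N) ?jmp (?x0 N)
                (\<lambda>n. U n \<omega>) (nat \<lfloor>c * real N powr \<rho>\<rfloor>) < ereal t}"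
    proof (intro exI[of _ N0] allI impI)
      fix N :: nat and t :: real assume NN0: "N0 \<le> N" and t0: "0 \<le> t"
      define M where "M = real N powr \<rho>"
      define m where "m = nat \<lfloor>c * M\<rfloor>"
      define s where "s = real N powr (- theta0 d r K y \<beta>) * t"
      have N1: "N \<ge> 1" using NN0 unfolding N0_def by simp
      have Npos: "real N > 0" using N1 by simp
      have MQ: "M \<ge> Q"
      proof -
        have "Q powr (1/\<rho>) \<le> real (nat \<lceil>Q powr (1/\<rho>)\<rceil>)" by (rule real_nat_ceiling_ge)
        also have "\<dots> \<le> real N0" unfolding N0_def by simp
        also have "\<dots> \<le> real N" using NN0 by simp
        finally have "Q powr (1/\<rho>) \<le> real N" .
        then have "(Q powr (1/\<rho>)) powr \<rho> \<le> real N powr \<rho>"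
          using \<rho> Q1 by (intro powr_mono2) auto
        moreover have "(Q powr (1/\<rho>)) powr \<rho> = Q" using \<rho> Q1 by (simp add: powr_powr)
        ultimately show ?thesis unfolding M_def by simp
      qed
      have MN: "M \<le> real N"
      proof -
        have "real N powr \<rho> \<le> real N powr 1" using N1 \<rho> by (intro powr_mono) auto
        then show ?thesis unfolding M_def using Npos by simp
      qed
      have M0: "M \<ge> 0" unfolding M_def by simp
      have mM: "real m \<le> c * M" unfolding m_def using c0 M0 by simp
      have good: "\<forall>n\<le>m. in_SM d r K y \<beta> z0h N M (jchain K (?rt N) ?jmp (?x0 N) u n)"
        if u: "\<forall>n. 0 < u n \<and> u n < 1" for u
      proof (intro allI impI)
        fix n assume nm: "n \<le> m"
        have ncM: "real n \<le> c * M" using nm mM by (meson of_nat_le_iff order_trans)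
        have "c * M \<le> 1 * M" using c1 M0 by (rule mult_right_mono)
        then have "real n \<le> real N" using ncM MN by linarith
        then have nN: "n \<le> N" by simp
        have nDM: "real n * D \<le> M / 2"
        proof -
          have "real n * D \<le> c * M * D" using ncM by (intro mult_right_mono) auto
          also have "\<dots> = M * (c * D)" by simp
          also have "\<dots> \<le> M * (1/2)" using cD M0 by (intro mult_left_mono) auto
          finally show ?thesis by simp
        qed
        have nLDM: "L * (real n * D) \<le> M / 2"
        proof -
          have "L * (real n * D) \<le> L * (c * M * D)" using ncM L0 by (intro mult_left_mono mult_right_mono) auto
          also have "\<dots> = M * (c * (L * D))" by (simp add: algebra_simps)
          also have "\<dots> \<le> M * (1/2)" using cLD M0 by (intro mult_left_mono) auto
          finally show ?thesis by simp
        qed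
        let ?x = "jchain K (?rt N) ?jmp (?x0 N) u n"
        show "in_SM d r K y \<beta> z0h N M ?x"
          unfolding in_SM_def
        proof (intro conjI ballI allI impI)
          fix i assume i: "i < d"
          have "real (?x i) \<le> real (z0l i) + real n * D"
            by (rule xl_bound[OF u kap Db i])
          moreover have "real (z0l i) \<le> Zl" unfolding Zl_def using i by (intro member_le_sum) auto
          moreover have "Zl \<le> M / 2"
          proof -
            have "L * (1 + D) \<ge> 0" using L0 by simp
            then show ?thesis using MQ unfolding Q_def by linarith
          qed
          ultimately show "real (?x i) \<le> M" using nDM by linarith
        next
          fix k assume "k \<in> R0 d r K y \<beta>"
          then have k: "k < K" by (simp add: R0_def)
          have "\<bar>lambdaH d r y N (\<lambda>i. real (?x (d + i)) / real N) k - s_const d r y z0h k\<bar>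
              \<le> L * ((real n * D + 1 + D) / N)"
            unfolding L_def B_def by (rule lam_bound[OF u kap z0h Db N1 nN k])
          also have "\<dots> = (L * (real n * D) + L * (1 + D)) / N" by (simp add: algebra_simps)
          also have "\<dots> \<le> M / N"
          proof (rule divide_right_mono)
            have "L * (1 + D) \<le> M / 2" using MQ Zl0 unfolding Q_def by linarith
            then show "L * (real n * D) + L * (1 + D) \<le> M" using nLDM by simp
          qed simp
          finally show "\<bar>lambdaH d r y N (\<lambda>i. real (?x (d + i)) / real N) k - s_const d r y z0h k\<bar> \<le> M / N" .
        qed
      qed
      show "measure P {\<omega> \<in> space P.
        (case cstate K (?rt N) ?jmp (?x0 N)
                (\<lambda>n. U n \<omega>) (real N powr (- theta0 d r K y \<beta>) * t) of
           None \<Rightarrow> True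
         | Some x \<Rightarrow> \<not> in_SM d r K y \<beta> z0h N (real N powr \<rho>) x)}
      \<le> measure P {\<omega> \<in> space P.
        ereal (real N powr theta0 d r K y \<beta>) *
          jtime K (?rt N) ?jmp (?x0 N)
                (\<lambda>n. U n \<omega>) (nat \<lfloor>c * real N powr \<rho>\<rfloor>) < ereal t}"
        unfolding M_def[symmetric] m_def[symmetric] s_def[symmetric]
      proof (rule finite_measure_mono_AE)
        have jm: "(\<lambda>\<omega>. jtime K (?rt N) ?jmp (?x0 N) (\<lambda>n. U n \<omega>) m) \<in> borel_measurable P"
          by (rule jtime_meas) (use Umeas in auto)
        show "{\<omega> \<in> space P. ereal (real N powr theta0 d r K y \<beta>) *
            jtime K (?rt N) ?jmp (?x0 N) (\<lambda>n. U n \<omega>) m < ereal t} \<in> sets P"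
          using jm by measurable
        show "AE \<omega> in P. \<omega> \<in> {\<omega> \<in> space P. case cstate K (?rt N) ?jmp (?x0 N) (\<lambda>n. U n \<omega>) s of
              None \<Rightarrow> True | Some x \<Rightarrow> \<not> in_SM d r K y \<beta> z0h N M x} \<longrightarrow>
          \<omega> \<in> {\<omega> \<in> space P. ereal (real N powr theta0 d r K y \<beta>) *
            jtime K (?rt N) ?jmp (?x0 N) (\<lambda>n. U n \<omega>) m < ereal t}"
          using AEu
        proof eventually_elim
          case (elim \<omega>)
          let ?u = "\<lambda>n. U n \<omega>"
          have nn: "\<forall>x. \<forall>k<K. ?rt N x k \<ge> 0" using rn_rate_nonneg[OF kap] by blast
          show ?case
          proof (intro impI)
            assume A: "\<omega> \<in> {\<omega> \<in> space P. case cstate K (?rt N) ?jmp (?x0 N) (\<lambda>n. U n \<omega>) s of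
              None \<Rightarrow> True | Some x \<Rightarrow> \<not> in_SM d r K y \<beta> z0h N M x}"
            have lt: "jtime K (?rt N) ?jmp (?x0 N) ?u m < ereal s"
              by (rule path[where Q="in_SM d r K y \<beta> z0h N M", OF nn elim good[OF elim]]) (use A in simp)
            have ge: "jtime K (?rt N) ?jmp (?x0 N) ?u m \<ge> 0" by (rule jtime_nonneg[OF nn elim])
            have "ereal (real N powr theta0 d r K y \<beta>) * jtime K (?rt N) ?jmp (?x0 N) ?u m < ereal t"
            proof (cases "jtime K (?rt N) ?jmp (?x0 N) ?u m")
              case (real a)
              have "a < s" using lt real by simp
              then have "real N powr theta0 d r K y \<beta> * a < real N powr theta0 d r K y \<beta> * s"
                using Npos by simp
              also have "\<dots> = t" unfolding s_def using Npos
                by (simp add: powr_minus field_simps)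
              finally show ?thesis using real by simp
            qed (use lt ge in auto)
            then show "\<omega> \<in> {\<omega> \<in> space P. ereal (real N powr theta0 d r K y \<beta>) *
              jtime K (?rt N) ?jmp (?x0 N) (\<lambda>n. U n \<omega>) m < ereal t}" using A by simp
          qed
        qed
      qed
    qed
  qed
qed

end
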